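(* Let $0\le v\le 1$, $r\neq 0$ and $a,b>0$, and let $\mu:=\min\{1-v,v\}$. If either (i) $r>0$ and $0<a\le b$, or (ii) $r<0$ and $a\ge b>0$, then $$G_v(a,b)\le \left\{1+\frac{\mu^2}{2}\left(\ln_r\frac{a}{b}\right)^2\right\}G_v(a,b)\le A_v(a,b).$$
   Context: For $a,b>0$ and $0\le v\le 1$: $A_v(a,b):=(1-v)a+vb$ and $G_v(a,b):=a^{1-v}b^v$. For $x>0$ and $r\neq 0$, the $r$-logarithm is $\ln_r x:=\frac{x^r-1}{r}$. *)

theory Defs
  imports Complex_Main
begin

definition wam :: "real \<Rightarrow> real \<Rightarrow> real \<Rightarrow> real" where
  "wam v a b = (1 - v) * a + v * b"

definition wgm :: "real \<Rightarrow> real \<Rightarrow> real \<Rightarrow> real" where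
  "wgm v a b = a powr (1 - v) * b powr v"

definition lnr :: "real \<Rightarrow> real \<Rightarrow> real" where
  "lnr r x = (x powr r - 1) / r"

end

theory Submission
  imports Defs
begin

lemma bracket_bound:
  fixes v t :: real
  assumes v0: "0 < v" and vh: "v \<le> 1/2"
  shows "v / (1 - v) \<le> v * exp (v * t) + (1 - v) * exp (- (1 - v) * t)"
proof -
  define c where "c = ln (v / (1 - v))"
  have v1: "v < 1" using vh by simp
  have cexp: "exp c = v / (1 - v)" unfolding c_def using v0 v1 by simp
  have cle: "c \<le> 0" unfolding c_def using v0 vh by (simp add: field_simps)
  define p where "p = c + v * t"
  define q where "q = - c - (1 - v) * t"
  define m where "m = (1 - v) * p + v * q"
  have m_eq: "m = (1 - 2 * v) * c" unfolding m_def p_def q_def by (simp add: algebra_simps)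
  have "c * v \<le> 0" using cle v0 by (simp add: mult_nonpos_nonneg)
  hence "c \<le> m" unfolding m_eq by (simp add: algebra_simps)
  hence "exp c \<le> exp m" by simp
  hence "v / (1 - v) \<le> exp m" using cexp by simp
  also have "exp m \<le> (1 - v) * exp p + v * exp q"
  proof -
    have e1: "exp m * (1 + (p - m)) \<le> exp m * exp (p - m)"
      by (intro mult_left_mono exp_ge_add_one_self) auto
    have e2: "exp m * (1 + (q - m)) \<le> exp m * exp (q - m)"
      by (intro mult_left_mono exp_ge_add_one_self) auto
    have ep: "exp m * exp (p - m) = exp p" by (simp add: exp_add[symmetric])
    have eq: "exp m * exp (q - m) = exp q" by (simp add: exp_add[symmetric])
    have "(1 - v) * (exp m * (1 + (p - m))) + v * (exp m * (1 + (q - m)))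
          \<le> (1 - v) * exp p + v * exp q"
      using e1 e2 ep eq v0 v1 by (intro add_mono mult_left_mono) auto
    moreover have "(1 - v) * (exp m * (1 + (p - m))) + v * (exp m * (1 + (q - m))) = exp m"
      unfolding m_def by (simp add: algebra_simps)
    ultimately show ?thesis by simp
  qed
  also have "(1 - v) * exp p + v * exp q = v * exp (v * t) + (1 - v) * exp (- (1 - v) * t)"
  proof -
    have "exp p = v / (1 - v) * exp (v * t)" unfolding p_def by (simp add: exp_add cexp)
    moreover have "exp q = (1 - v) / v * exp (- (1 - v) * t)"
    proof -
      have "q = (- (1 - v) * t) - c" unfolding q_def by (simp add: algebra_simps)
      hence "exp q = exp (- (1 - v) * t) / exp c" by (simp add: exp_diff)
      thus ?thesis using cexp v0 v1 by simp
    qed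
    ultimately show ?thesis using v0 v1 by (simp add: field_simps)
  qed
  finally show ?thesis .
qed

lemma key_half:
  fixes v t :: real
  assumes v0: "0 < v" and vh: "v \<le> 1/2"
  shows "1 + v^2 / 2 * t^2 \<le> (1 - v) * exp (v * t) + v * exp (- (1 - v) * t)"
proof -
  have v1: "v < 1" using vh by simp
  define g where "g = (\<lambda>t. (1 - v) * exp (v * t) + v * exp (- (1 - v) * t) - 1 - v^2 / 2 * t^2)"
  define g1 where "g1 = (\<lambda>t. v * (1 - v) * exp (v * t) - v * (1 - v) * exp (- (1 - v) * t) - v^2 * t)"
  define g2 where "g2 = (\<lambda>t. v^2 * (1 - v) * exp (v * t) + v * (1 - v)^2 * exp (- (1 - v) * t) - v^2)"
  have dg: "DERIV g x :> g1 x" for x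
    unfolding g_def g1_def by (auto intro!: derivative_eq_intros simp: power2_eq_square algebra_simps)
  have dg1: "DERIV g1 x :> g2 x" for x
    unfolding g1_def g2_def by (auto intro!: derivative_eq_intros simp: power2_eq_square algebra_simps)
  have g2nn: "g2 x \<ge> 0" for x
  proof -
    have b: "v / (1 - v) \<le> v * exp (v * x) + (1 - v) * exp (- (1 - v) * x)"
      by (rule bracket_bound[OF v0 vh])
    have "v * (1 - v) * (v / (1 - v)) \<le> v * (1 - v) * (v * exp (v * x) + (1 - v) * exp (- (1 - v) * x))"
      using b v0 v1 by (intro mult_left_mono) auto
    moreover have "v * (1 - v) * (v / (1 - v)) = v^2" using v1 by (simp add: power2_eq_square)
    ultimately show ?thesis unfolding g2_def by (simp add: algebra_simps power2_eq_square)
  qed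
  have g10: "g1 0 = 0" unfolding g1_def by simp
  have g0: "g 0 = 0" unfolding g_def by simp
  have "g t \<ge> 0"
  proof (cases "t \<ge> 0")
    case True
    have "g 0 \<le> g t"
    proof (rule DERIV_nonneg_imp_nondecreasing[OF True])
      fix x assume x: "0 \<le> x" "x \<le> t"
      have "g1 0 \<le> g1 x"
        by (rule DERIV_nonneg_imp_nondecreasing[OF x(1)]) (use dg1 g2nn in blast)
      thus "\<exists>y. DERIV g x :> y \<and> 0 \<le> y" using dg g10 by auto
    qed
    thus ?thesis using g0 by simp
  next
    case False
    hence t0: "t \<le> 0" by simp
    have "g t \<ge> g 0"
    proof (rule DERIV_nonpos_imp_nonincreasing[OF t0])
      fix x assume x: "t \<le> x" "x \<le> 0"
      have "g1 x \<le> g1 0"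
        by (rule DERIV_nonneg_imp_nondecreasing[OF x(2)]) (use dg1 g2nn in blast)
      thus "\<exists>y. DERIV g x :> y \<and> y \<le> 0" using dg g10 by auto
    qed
    thus ?thesis using g0 by simp
  qed
  thus ?thesis unfolding g_def by simp
qed

lemma key:
  fixes v t :: real
  assumes "0 \<le> v" "v \<le> 1"
  shows "1 + (min (1 - v) v)^2 / 2 * t^2 \<le> (1 - v) * exp (v * t) + v * exp (- (1 - v) * t)"
proof (cases "v = 0 \<or> v = 1")
  case True
  then show ?thesis by auto
next
  case False
  hence v: "0 < v" "v < 1" using assms by auto
  show ?thesis
  proof (cases "v \<le> 1/2")
    case True
    hence "min (1 - v) v = v" by simp
    then show ?thesis using key_half[OF v(1) True] by simp
  next
    case False
    have "1 + (1 - v)^2 / 2 * (-t)^2 \<le> (1 - (1 - v)) * exp ((1 - v) * (-t)) + (1 - v) * exp (- (1 - (1 - v)) * (-t))"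
      by (rule key_half) (use v False in auto)
    then show ?thesis using False by (simp add: min_def algebra_simps)
  qed
qed

theorem corollary2p3:
  fixes v r a b :: real
  assumes "0 \<le> v" "v \<le> 1" "r \<noteq> 0" "a > 0" "b > 0"
    and "(r > 0 \<and> a \<le> b) \<or> (r < 0 \<and> b \<le> a)"
  defines "\<mu> \<equiv> min (1 - v) v"
  shows "wgm v a b \<le> (1 + \<mu>\<^sup>2 / 2 * (lnr r (a / b))\<^sup>2) * wgm v a b
    \<and> (1 + \<mu>\<^sup>2 / 2 * (lnr r (a / b))\<^sup>2) * wgm v a b \<le> wam v a b"
proof -
  define t where "t = ln (a / b)"
  define L where "L = lnr r (a / b)"
  have ab: "a / b = exp t" unfolding t_def using assms by simp
  have Lt: "L = (exp (r * t) - 1) / r" unfolding L_def lnr_def ab powr_def by (simp add: mult.commute)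
  have wpos: "wgm v a b > 0" unfolding wgm_def using assms by simp
  have LL: "L^2 \<le> t^2"
  proof -
    have e: "exp (r * t) \<ge> 1 + r * t" by (rule exp_ge_add_one_self)
    from assms(6) show ?thesis
    proof
      assume h: "0 < r \<and> a \<le> b"
      have "a / b \<le> 1" using h assms by simp
      hence tn: "t \<le> 0" using ab by simp
      have "exp (r * t) \<le> 1" using h tn by (simp add: mult_nonneg_nonpos)
      hence "L \<le> 0" using Lt h by (simp add: divide_nonpos_pos)
      moreover have "t \<le> L"
      proof -
        have "r * L = exp (r * t) - 1" using Lt h by simp
        hence "r * t \<le> r * L" using e by linarith
        thus ?thesis using h by simp
      qed
      ultimately show ?thesis using tn by (simp add: abs_le_square_iff[symmetric])
    next
      assume h: "r < 0 \<and> b \<le> a"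
      have "a / b \<ge> 1" using h assms by simp
      hence tn: "t \<ge> 0" using ab by simp
      have "exp (r * t) \<le> 1" using h tn by (simp add: mult_nonpos_nonneg)
      hence "0 \<le> L" using Lt h by (simp add: divide_nonpos_neg)
      moreover have "L \<le> t"
      proof -
        have "r * L = exp (r * t) - 1" using Lt h by simp
        hence "r * t \<le> r * L" using e by linarith
        thus ?thesis using h by (simp add: mult_le_cancel_left)
      qed
      ultimately show ?thesis using tn by (simp add: abs_le_square_iff[symmetric])
    qed
  qed
  have first: "wgm v a b \<le> (1 + \<mu>\<^sup>2 / 2 * L\<^sup>2) * wgm v a b"
    using wpos by simp
  have "1 + \<mu>\<^sup>2 / 2 * L\<^sup>2 \<le> 1 + \<mu>\<^sup>2 / 2 * t\<^sup>2"
    using LL by (intro add_left_mono mult_left_mono) auto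
  also have "\<dots> \<le> (1 - v) * exp (v * t) + v * exp (- (1 - v) * t)"
    unfolding \<mu>_def by (rule key[OF assms(1,2)])
  finally have K: "1 + \<mu>\<^sup>2 / 2 * L\<^sup>2 \<le> (1 - v) * exp (v * t) + v * exp (- (1 - v) * t)" .
  have wg: "wgm v a b = b * exp ((1 - v) * t)"
  proof -
    have "a = b * exp t" using ab assms by (simp add: field_simps)
    hence "wgm v a b = (b * exp t) powr (1 - v) * b powr v" unfolding wgm_def by simp
    also have "\<dots> = b powr (1 - v) * exp ((1 - v) * t) * b powr v"
    proof -
      have "(b * exp t) powr (1 - v) = b powr (1 - v) * exp t powr (1 - v)"
        using assms by (simp add: powr_mult)
      moreover have "exp t powr (1 - v) = exp ((1 - v) * t)" by (simp add: powr_def mult.commute)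
      ultimately show ?thesis by simp
    qed
    also have "\<dots> = b * exp ((1 - v) * t)"
      using assms by (simp add: powr_add[symmetric] mult_ac)
    finally show ?thesis .
  qed
  have wa: "wam v a b = b * exp ((1 - v) * t) * ((1 - v) * exp (v * t) + v * exp (- (1 - v) * t))"
  proof -
    have "a = b * exp t" using ab assms by (simp add: field_simps)
    moreover have "exp ((1 - v) * t) * exp (v * t) = exp t" by (simp add: exp_add[symmetric] algebra_simps)
    moreover have "exp ((1 - v) * t) * exp (- (1 - v) * t) = 1" by (simp add: exp_add[symmetric] algebra_simps)
    ultimately show ?thesis unfolding wam_def by (simp add: algebra_simps)
  qed
  have second: "(1 + \<mu>\<^sup>2 / 2 * L\<^sup>2) * wgm v a b \<le> wam v a b"
    unfolding wa using mult_right_mono[OF K, of "b * exp ((1 - v) * t)"] assms wg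
    by (simp add: mult_ac)
  show ?thesis using first second unfolding L_def by simp
qed

end
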